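(* Let $\alpha>0$ be the fraction of perfect labelers. There is an absolute constant $C$ such that the following holds. For a finite unlabeled sample set $S\subseteq\mathcal{X}$ and $\delta>0$, consider the procedure $\textsc{Prune-and-Label}(S,\delta)$: for each $x\in S$, draw a set $L$ of $k=\lceil C\alpha^{-2}\log(|S|/\delta)\rceil$ labelers independently from $P$; if $\mathrm{Maj\text{-}size}_L(x)\le1-\frac\alpha4$, make a golden query $y^*=f^*(x)$ and prune the labelers (replace $P$ by $P$ conditioned on labelers $i$ with $\ell_i(x)=y^*$), stopping the procedure; otherwise add $(x,\mathrm{Maj}_L(x))$ to the output $\bar S$. Then with probability at least $1-\delta$, either the procedure prunes the set of labelers, or its output $\bar S$ satisfies $y=f^*(x)$ for all $(x,y)\in\bar S$.
   Context: There is an unknown target $f^*:\mathcal{X}\to\{+1,-1\}$. Labeler $i$ is a function $\ell_i:\mathcal{X}\to\{+1,-1\}$, perfect if $\ell_i$ agrees with $f^*$; non-perfect labelers are arbitrary fixed functions. $P$ is the uniform distribution over labelers and $\alpha$ is the $P$-probability that a labeler is perfect. For a set $L$ of labelers, $\mathrm{Maj}_L(x)$ is the label given to $x$ by the majority of labelers in $L$, and $\mathrm{Maj\text{-}size}_L(x)$ is the fraction of labelers in $L$ whose label on $x$ equals $\mathrm{Maj}_L(x)$. A golden query on $x$ returns $f^*(x)$. *)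

theory Defs
  imports "HOL-Probability.Probability"
begin

text \<open>The random draws of the procedure are
  encoded by a function omega :: 'x * nat => nat: omega (x, j) is the j-th labeler
  (j < k) drawn independently from P (uniform over {..<n}) for the sample point x.
  The multiset L drawn for x is thus {# omega (x, j). j < k #}.\<close>

definition frac_perfect :: "nat \<Rightarrow> (nat \<Rightarrow> 'x \<Rightarrow> int) \<Rightarrow> ('x \<Rightarrow> int) \<Rightarrow> real" where
  "frac_perfect n lab f = real (card {i. i < n \<and> lab i = f}) / real n"

definition count_lab :: "(nat \<Rightarrow> 'x \<Rightarrow> int) \<Rightarrow> ('x \<times> nat \<Rightarrow> nat) \<Rightarrow> nat \<Rightarrow> 'x \<Rightarrow> int \<Rightarrow> nat" where
  "count_lab lab \<omega> k x y = card {j. j < k \<and> lab (\<omega> (x, j)) x = y}"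

definition maj :: "(nat \<Rightarrow> 'x \<Rightarrow> int) \<Rightarrow> ('x \<times> nat \<Rightarrow> nat) \<Rightarrow> nat \<Rightarrow> 'x \<Rightarrow> int" where
  "maj lab \<omega> k x = (if count_lab lab \<omega> k x 1 \<ge> count_lab lab \<omega> k x (-1) then 1 else -1)"

text \<open>Fraction of the drawn labelers agreeing with the majority label
  (convention: 1 if no labeler was drawn).\<close>
definition maj_size :: "(nat \<Rightarrow> 'x \<Rightarrow> int) \<Rightarrow> ('x \<times> nat \<Rightarrow> nat) \<Rightarrow> nat \<Rightarrow> 'x \<Rightarrow> real" where
  "maj_size lab \<omega> k x = (if k = 0 then 1 else
     real (count_lab lab \<omega> k x (maj lab \<omega> k x)) / real k)"

text \<open>Prune-and-Label run on the sample points in the order of the list;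
  None means the procedure made a golden query and pruned (and stopped);
  Some out means it finished without pruning, with output out.\<close>
fun prune_and_label :: "(nat \<Rightarrow> 'x \<Rightarrow> int) \<Rightarrow> real \<Rightarrow> nat \<Rightarrow> ('x \<times> nat \<Rightarrow> nat) \<Rightarrow> 'x list
    \<Rightarrow> ('x \<times> int) list option" where
  "prune_and_label lab \<alpha> k \<omega> [] = Some []"
| "prune_and_label lab \<alpha> k \<omega> (x # xs) =
     (if maj_size lab \<omega> k x \<le> 1 - \<alpha> / 4 then None
      else map_option (\<lambda>out. (x, maj lab \<omega> k x) # out) (prune_and_label lab \<alpha> k \<omega> xs))"

definition draws :: "nat \<Rightarrow> 'x set \<Rightarrow> nat \<Rightarrow> ('x \<times> nat \<Rightarrow> nat) pmf" where
  "draws n S k = Pi_pmf (S \<times> {..<k}) 0 (\<lambda>_. pmf_of_set {..<n})"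

end

theory Submission
  imports Defs
begin

lemma bern:
  fixes P :: "nat \<Rightarrow> bool"
  assumes "n > 0"
  shows "map_pmf P (pmf_of_set {..<n}) = bernoulli_pmf (real (card {i. i < n \<and> P i}) / real n)"
proof -
  define p where "p = real (card {i. i < n \<and> P i}) / real n"
  have c: "card {i. i < n \<and> P i} \<le> n"
    by (metis (no_types, lifting) card_lessThan card_mono finite_lessThan lessThan_iff mem_Collect_eq subsetI)
  have p01: "0 \<le> p" "p \<le> 1" using c assms by (auto simp: p_def field_simps)
  have t: "pmf (map_pmf P (pmf_of_set {..<n})) True = p"
  proof -
    have "pmf (map_pmf P (pmf_of_set {..<n})) True = measure (pmf_of_set {..<n}) (P -` {True})"
      by (simp add: pmf_map)
    also have "\<dots> = real (card ({..<n} \<inter> P -` {True})) / real n"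
      using assms by (subst measure_pmf_of_set) auto
    also have "{..<n} \<inter> P -` {True} = {i. i < n \<and> P i}" by auto
    finally show ?thesis by (simp add: p_def)
  qed
  show ?thesis unfolding p_def[symmetric]
  proof (rule pmf_eqI)
    fix b :: bool
    show "pmf (map_pmf P (pmf_of_set {..<n})) b = pmf (bernoulli_pmf p) b"
    proof (cases b)
      case True then show ?thesis using t p01 by simp
    next
      case False
      have "pmf (map_pmf P (pmf_of_set {..<n})) False = 1 - pmf (map_pmf P (pmf_of_set {..<n})) True"
        using pmf_False_conv_True by blast
      then show ?thesis using False t p01 by simp
    qed
  qed
qed

lemma count_dist:
  assumes S: "finite S" "x \<in> S" and n: "n > 0"
  shows "map_pmf (\<lambda>\<omega>. count_lab lab \<omega> k x (f x)) (draws n S k)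
       = binomial_pmf k (real (card {i. i < n \<and> lab i x = f x}) / real n)"
proof -
  define P where "P = (\<lambda>i. lab i x = f x)"
  define p where "p = real (card {i. i < n \<and> lab i x = f x}) / real n"
  define A where "A = {x} \<times> {..<k}"
  have c: "card {i. i < n \<and> P i} \<le> n"
    by (metis (no_types, lifting) card_lessThan card_mono finite_lessThan lessThan_iff mem_Collect_eq subsetI)
  have p01: "p \<in> {0..1}" using c n by (auto simp: p_def P_def field_simps)
  have fin: "finite (S \<times> {..<k})" using S by simp
  have AS: "A \<subseteq> S \<times> {..<k}" using S by (auto simp: A_def)
  have cnt: "count_lab lab \<omega> k x (f x) = card {a \<in> A. (P \<circ> \<omega>) a}" for \<omega>
  proof -
    have "{a \<in> A. (P \<circ> \<omega>) a} = (\<lambda>j. (x, j)) ` {j. j < k \<and> lab (\<omega> (x, j)) x = f x}"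
      by (auto simp: A_def P_def)
    then show ?thesis unfolding count_lab_def by (simp add: card_image inj_on_def)
  qed
  have "map_pmf (\<lambda>\<omega>. count_lab lab \<omega> k x (f x)) (draws n S k)
      = map_pmf (\<lambda>g. card {a \<in> A. g a}) (map_pmf (\<lambda>h. P \<circ> h) (draws n S k))"
    by (simp add: map_pmf_comp cnt)
  also have "map_pmf (\<lambda>h. P \<circ> h) (draws n S k) = Pi_pmf (S \<times> {..<k}) (P 0) (\<lambda>_. map_pmf P (pmf_of_set {..<n}))"
    unfolding draws_def by (rule Pi_pmf_map[symmetric]) (use fin in auto)
  also have "(\<lambda>_::'a \<times> nat. map_pmf P (pmf_of_set {..<n})) = (\<lambda>_. bernoulli_pmf p)"
    using bern[OF n, of P] by (simp add: p_def P_def)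
  also have "map_pmf (\<lambda>g. card {a \<in> A. g a}) (Pi_pmf (S \<times> {..<k}) (P 0) (\<lambda>_. bernoulli_pmf p))
     = map_pmf (\<lambda>g. card {a \<in> A. g a}) (Pi_pmf A (P 0) (\<lambda>_. bernoulli_pmf p))"
    by (subst Pi_pmf_subset[OF fin AS]) (simp add: map_pmf_comp cong: conj_cong)
  also have "\<dots> = binomial_pmf k p"
    by (rule binomial_pmf_altdef'[symmetric]) (use p01 in \<open>auto simp: A_def card_cartesian_product\<close>)
  finally show ?thesis by (simp add: p_def)
qed
lemma tail:
  assumes S: "finite S" "x \<in> S" and n: "n > 0" and k: "k > 0" and a: "0 < \<alpha>"
    and ap: "\<alpha> \<le> real (card {i. i < n \<and> lab i x = f x}) / real n"
  shows "measure_pmf.prob (draws n S k) {\<omega>. real (count_lab lab \<omega> k x (f x)) \<le> \<alpha> * k / 4}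
         \<le> exp (- 9 * \<alpha>^2 * k / 8)"
proof -
  define p where "p = real (card {i. i < n \<and> lab i x = f x}) / real n"
  have c: "card {i. i < n \<and> lab i x = f x} \<le> n"
    by (metis (no_types, lifting) card_lessThan card_mono finite_lessThan lessThan_iff mem_Collect_eq subsetI)
  have p01: "p \<in> {0..1}" using c n by (auto simp: p_def field_simps)
  interpret binomial_distribution k p by unfold_locales (rule p01)
  define \<epsilon> where "\<epsilon> = k * p - \<alpha> * k / 4"
  have ap': "\<alpha> \<le> p" using ap by (simp add: p_def)
  have e1: "\<epsilon> \<ge> 3 * \<alpha> * k / 4" using ap' k by (simp add: \<epsilon>_def algebra_simps mult_left_mono)
  have "0 \<le> 3 * \<alpha> * k / 4" using a by simp
  with e1 have e0: "\<epsilon> \<ge> 0" by linarith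
  have "measure_pmf.prob (draws n S k) {\<omega>. real (count_lab lab \<omega> k x (f x)) \<le> \<alpha> * k / 4}
      = measure_pmf.prob (map_pmf (\<lambda>\<omega>. count_lab lab \<omega> k x (f x)) (draws n S k)) {c. real c \<le> \<alpha> * k / 4}"
    by simp
  also have "\<dots> = measure_pmf.prob (binomial_pmf k p) {c. real c \<le> k * p - \<epsilon>}"
    by (simp add: count_dist[OF S n] p_def \<epsilon>_def)
  also have "\<dots> \<le> exp (-2 * \<epsilon>\<^sup>2 / k)" by (rule prob_le[OF k e0])
  also have "\<dots> \<le> exp (- 9 * \<alpha>^2 * k / 8)"
  proof -
    have "(3 * \<alpha> * k / 4)\<^sup>2 \<le> \<epsilon>\<^sup>2" using e1 a k by (intro power_mono) auto
    then have "9 * \<alpha>^2 * k / 8 \<le> 2 * \<epsilon>\<^sup>2 / k" using k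
      by (simp add: field_simps power2_eq_square)
    then show ?thesis by simp
  qed
  finally show ?thesis .
qed

lemma maj_ok:
  assumes a: "\<alpha> > 0" and c: "real (count_lab lab \<omega> k x (f x)) > \<alpha> * k / 4"
    and m: "\<not> maj_size lab \<omega> k x \<le> 1 - \<alpha> / 4"
  shows "maj lab \<omega> k x = f x"
proof (rule ccontr)
  assume ne: "maj lab \<omega> k x \<noteq> f x"
  define y where "y = maj lab \<omega> k x"
  have "0 \<le> \<alpha> * k / 4" using a by simp
  with c have cpos: "count_lab lab \<omega> k x (f x) > 0" by linarith
  have sub: "{j. j < k \<and> lab (\<omega> (x, j)) x = y} \<union> {j. j < k \<and> lab (\<omega> (x, j)) x = f x} \<subseteq> {..<k}" by auto
  have "count_lab lab \<omega> k x y + count_lab lab \<omega> k x (f x)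
      = card ({j. j < k \<and> lab (\<omega> (x, j)) x = y} \<union> {j. j < k \<and> lab (\<omega> (x, j)) x = f x})"
    unfolding count_lab_def using ne by (subst card_Un_disjoint) (auto simp: y_def)
  also have "\<dots> \<le> k" using card_mono[OF _ sub] by simp
  finally have sum: "count_lab lab \<omega> k x y + count_lab lab \<omega> k x (f x) \<le> k" .
  then have k: "k > 0" using cpos by linarith
  have "maj_size lab \<omega> k x = real (count_lab lab \<omega> k x y) / k"
    using k by (simp add: maj_size_def y_def)
  also have "\<dots> \<le> (k - real (count_lab lab \<omega> k x (f x))) / k"
    using sum k by (intro divide_right_mono) auto
  also have "\<dots> \<le> 1 - \<alpha> / 4"
    using c k by (simp add: field_simps)
  finally show False using m by simp
qed

lemma det:
  assumes a: "\<alpha> > 0" and c: "\<forall>x\<in>set xs. real (count_lab lab \<omega> k x (f x)) > \<alpha> * k / 4"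
  shows "case prune_and_label lab \<alpha> k \<omega> xs of None \<Rightarrow> True | Some out \<Rightarrow> (\<forall>(x,y)\<in>set out. y = f x)"
  using c
proof (induction xs)
  case Nil
  then show ?case by simp
next
  case (Cons x xs)
  show ?case
  proof (cases "maj_size lab \<omega> k x \<le> 1 - \<alpha> / 4")
    case True then show ?thesis by simp
  next
    case False
    have "maj lab \<omega> k x = f x" using maj_ok[OF a _ False] Cons.prems by simp
    then show ?thesis using False Cons.IH Cons.prems
      by (auto split: option.splits)
  qed
qed


theorem lemma10:
  "\<exists>C::real. C > 0 \<and>
     (\<forall>(n::nat) (lab :: nat \<Rightarrow> 'x \<Rightarrow> int) (f :: 'x \<Rightarrow> int) (xs :: 'x list) (\<delta>::real).
        (\<forall>x. f x \<in> {1, -1}) \<longrightarrow> (\<forall>i x. lab i x \<in> {1, -1}) \<longrightarrow>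
        frac_perfect n lab f > 0 \<longrightarrow> distinct xs \<longrightarrow> \<delta> > 0 \<longrightarrow>
        (let \<alpha> = frac_perfect n lab f;
             k = nat \<lceil>C * \<alpha> powr (-2) * ln (real (length xs) / \<delta>)\<rceil>
         in measure_pmf.prob (draws n (set xs) k)
              {\<omega>. case prune_and_label lab \<alpha> k \<omega> xs of
                     None \<Rightarrow> True
                   | Some out \<Rightarrow> (\<forall>(x, y) \<in> set out. y = f x)} \<ge> 1 - \<delta>))"
proof (rule exI[of _ 1], intro conjI allI impI)
  fix n :: nat and lab :: "nat \<Rightarrow> 'x \<Rightarrow> int" and f :: "'x \<Rightarrow> int" and xs :: "'x list" and \<delta> :: real
  assume fp: "frac_perfect n lab f > 0" and dist: "distinct xs" and d: "\<delta> > 0"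
  define \<alpha> where "\<alpha> = frac_perfect n lab f"
  define m where "m = length xs"
  define k where "k = nat \<lceil>1 * \<alpha> powr (-2) * ln (real m / \<delta>)\<rceil>"
  define G where "G = {\<omega>. case prune_and_label lab \<alpha> k \<omega> xs of
                     None \<Rightarrow> True
                   | Some out \<Rightarrow> (\<forall>(x, y) \<in> set out. y = f x)}"
  have "measure_pmf.prob (draws n (set xs) k) G \<ge> 1 - \<delta>"
  proof (cases "\<delta> \<ge> 1 \<or> xs = []")
    case True
    then show ?thesis
    proof
      assume "1 \<le> \<delta>" then show ?thesis by (smt (verit) measure_nonneg)
    next
      assume "xs = []"
      then have "G = UNIV" by (simp add: G_def)
      then show ?thesis using d by simp
    qed
  next
    case False
    then have d1: "\<delta> < 1" and m1: "m \<ge> 1" by (auto simp: m_def Suc_le_eq)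
    have a: "\<alpha> > 0" using fp by (simp add: \<alpha>_def)
    have n: "n > 0" using fp by (cases "n = 0") (auto simp: frac_perfect_def)
    have md: "real m / \<delta> > 1" using d d1 m1 by (simp add: field_simps)
    have lnpos: "ln (real m / \<delta>) > 0" using md by simp
    have ap: "\<alpha> powr (-2) = 1 / \<alpha>^2" using a by (simp add: powr_minus powr_realpow divide_inverse)
    have kge: "real k \<ge> ln (real m / \<delta>) / \<alpha>^2"
    proof -
      define v where "v = ln (real m / \<delta>) / \<alpha>^2"
      have v0: "v \<ge> 0" using lnpos by (simp add: v_def)
      have "k = nat \<lceil>v\<rceil>" unfolding k_def ap v_def by simp
      moreover have "\<lceil>v\<rceil> \<ge> 0" using v0 by simp
      ultimately have "real k = of_int \<lceil>v\<rceil>" by simp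
      then show ?thesis using le_of_int_ceiling[of v] by (simp add: v_def)
    qed
    have k: "k > 0"
    proof -
      have "ln (real m / \<delta>) / \<alpha>^2 > 0" using lnpos a by simp
      then show ?thesis using kge by linarith
    qed
    have each: "measure_pmf.prob (draws n (set xs) k) {\<omega>. real (count_lab lab \<omega> k x (f x)) \<le> \<alpha> * k / 4}
          \<le> \<delta> / m" if x: "x \<in> set xs" for x
    proof -
      have "\<alpha> \<le> real (card {i. i < n \<and> lab i x = f x}) / real n"
      proof -
        have "card {i. i < n \<and> lab i = f} \<le> card {i. i < n \<and> lab i x = f x}"
          by (rule card_mono) auto
        then show ?thesis using n by (simp add: \<alpha>_def frac_perfect_def divide_right_mono)
      qed
      then have "measure_pmf.prob (draws n (set xs) k) {\<omega>. real (count_lab lab \<omega> k x (f x)) \<le> \<alpha> * k / 4}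
         \<le> exp (- 9 * \<alpha>^2 * k / 8)" by (intro tail[OF _ x n k a]) auto
      also have "\<dots> \<le> exp (- ln (real m / \<delta>))"
      proof -
        have "\<alpha>^2 * k \<ge> ln (real m / \<delta>)" using kge a by (simp add: field_simps)
        then have "9 * \<alpha>^2 * k / 8 \<ge> ln (real m / \<delta>)" using lnpos by linarith
        then show ?thesis by simp
      qed
      also have "\<dots> = \<delta> / m" using md d m1 by (simp add: exp_minus exp_diff)
      finally show ?thesis .
    qed
    define E where "E = (\<lambda>x. {\<omega>. real (count_lab lab \<omega> k x (f x)) \<le> \<alpha> * k / 4})"
    have sub: "UNIV - (\<Union>x\<in>set xs. E x) \<subseteq> G"
    proof
      fix \<omega> assume "\<omega> \<in> UNIV - (\<Union>x\<in>set xs. E x)"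
      then have "\<forall>x\<in>set xs. real (count_lab lab \<omega> k x (f x)) > \<alpha> * k / 4" by (auto simp: E_def)
      from det[OF a this] show "\<omega> \<in> G" by (simp add: G_def)
    qed
    have "measure_pmf.prob (draws n (set xs) k) (\<Union>x\<in>set xs. E x) \<le> (\<Sum>x\<in>set xs. measure_pmf.prob (draws n (set xs) k) (E x))"
      by (rule measure_pmf.finite_measure_subadditive_finite) auto
    also have "\<dots> \<le> (\<Sum>x\<in>set xs. \<delta> / m)" by (intro sum_mono) (unfold E_def, rule each)
    also have "\<dots> = \<delta>" using dist m1 by (simp add: m_def distinct_card, auto)
    finally have U: "measure_pmf.prob (draws n (set xs) k) (\<Union>x\<in>set xs. E x) \<le> \<delta>" .
    have "1 - \<delta> \<le> measure_pmf.prob (draws n (set xs) k) (UNIV - (\<Union>x\<in>set xs. E x))"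
      using U by (subst measure_pmf.prob_compl[simplified]) auto
    also have "\<dots> \<le> measure_pmf.prob (draws n (set xs) k) G"
      by (rule measure_pmf.finite_measure_mono[OF sub]) simp
    finally show ?thesis .
  qed
  then show "let \<alpha> = frac_perfect n lab f;
             k = nat \<lceil>1 * \<alpha> powr (-2) * ln (real (length xs) / \<delta>)\<rceil>
         in measure_pmf.prob (draws n (set xs) k)
              {\<omega>. case prune_and_label lab \<alpha> k \<omega> xs of
                     None \<Rightarrow> True
                   | Some out \<Rightarrow> (\<forall>(x, y) \<in> set out. y = f x)} \<ge> 1 - \<delta>"
    by (simp add: Let_def \<alpha>_def k_def m_def G_def)
qed (simp)

end
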